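(* Let $M=(S,\mathrm{Act},P)$ be an MDP, $T\subseteq S$, $\mathrm{opt}\in\{\min,\max\}$, and let $r\in\mathbb{N}_\infty^S$ satisfy $\tilde D^{\mathrm{opt}}(r)\le r$ (pointwise). Then for all $s\in S$: if $r(s)<\infty$ then $\Pr^{\mathrm{opt}}_s(\Diamond T)<1$.
   Context: An MDP is a tuple $M=(S,\mathrm{Act},P)$ with $S$ finite, $\mathrm{Act}$ finite, $P\colon S\times\mathrm{Act}\times S\to[0,1]$ with $\sum_{s'}P(s,a,s')\in\{0,1\}$; $\mathrm{Act}(s)=\{a\mid\sum_{s'}P(s,a,s')=1\}$ is nonempty for all $s$; $\mathrm{Post}(s,a)=\{s'\mid P(s,a,s')>0\}$. A strategy is $\sigma\colon S\to\mathrm{Act}$ with $\sigma(s)\in\mathrm{Act}(s)$, inducing a Markov chain with transitions $P(s,\sigma(s),\cdot)$; $\Pr^\sigma_s(\Diamond T)$ is the probability of visiting $T$ from $s$ and $\Pr^{\mathrm{opt}}_s(\Diamond T)=\mathrm{opt}_\sigma\Pr^\sigma_s(\Diamond T)$. $\mathbb{N}_\infty=\mathbb{N}\cup\{\infty\}$ with $\infty+1=\infty$. The complementary distance operator $\tilde D^{\mathrm{opt}}\colon\mathbb{N}_\infty^S\to\mathbb{N}_\infty^S$ is $\tilde D^{\mathrm{opt}}(r)(s)=\infty$ if $s\in T$, and for $s\notin T$: $\tilde D^{\mathrm{opt}}(r)(s)=\mathrm{opt}_{a\in\mathrm{Act}(s)}\big(\min_{s'\in\mathrm{Post}(s,a)}r(s')+[\exists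 u,v\in\mathrm{Post}(s,a)\colon r(u)\neq r(v)]\big)$, where $[\varphi]\in\{0,1\}$ is the Iverson bracket. *)

theory Defs
  imports Complex_Main "HOL-Library.Extended_Nat"
begin

definition is_mdp :: "('s::finite \<Rightarrow> 'a::finite \<Rightarrow> 's \<Rightarrow> real) \<Rightarrow> bool" where
  "is_mdp P \<longleftrightarrow>
     (\<forall>s a s'. 0 \<le> P s a s' \<and> P s a s' \<le> 1) \<and>
     (\<forall>s a. (\<Sum>s'\<in>UNIV. P s a s') \<in> {0, 1}) \<and>
     (\<forall>s. {a. (\<Sum>s'\<in>UNIV. P s a s') = 1} \<noteq> {})"

definition Act :: "('s::finite \<Rightarrow> 'a \<Rightarrow> 's \<Rightarrow> real) \<Rightarrow> 's \<Rightarrow> 'a set" where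
  "Act P s = {a. (\<Sum>s'\<in>UNIV. P s a s') = 1}"

definition Post :: "('s \<Rightarrow> 'a \<Rightarrow> 's \<Rightarrow> real) \<Rightarrow> 's \<Rightarrow> 'a \<Rightarrow> 's set" where
  "Post P s a = {s'. P s a s' > 0}"

definition strategies :: "('s::finite \<Rightarrow> 'a \<Rightarrow> 's \<Rightarrow> real) \<Rightarrow> ('s \<Rightarrow> 'a) set" where
  "strategies P = {\<sigma>. \<forall>s. \<sigma> s \<in> Act P s}"

fun reach_within :: "('s::finite \<Rightarrow> 'a \<Rightarrow> 's \<Rightarrow> real) \<Rightarrow> ('s \<Rightarrow> 'a) \<Rightarrow> 's set \<Rightarrow> nat \<Rightarrow> 's \<Rightarrow> real" where
  "reach_within P \<sigma> T 0 s = (if s \<in> T then 1 else 0)"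
| "reach_within P \<sigma> T (Suc n) s =
     (if s \<in> T then 1 else (\<Sum>s'\<in>UNIV. P s (\<sigma> s) s' * reach_within P \<sigma> T n s'))"

text \<open>Pr^\<sigma>_s(\<Diamond>T): probability of eventually visiting T = supremum (limit) of the
  step-bounded reachability probabilities (the event \<Diamond>T is the increasing union of
  the events \<Diamond>^{\<le>n} T).\<close>
definition reach_prob :: "('s::finite \<Rightarrow> 'a \<Rightarrow> 's \<Rightarrow> real) \<Rightarrow> ('s \<Rightarrow> 'a) \<Rightarrow> 's set \<Rightarrow> 's \<Rightarrow> real" where
  "reach_prob P \<sigma> T s = (SUP n. reach_within P \<sigma> T n s)"

datatype opt = OptMin | OptMax

definition opt_reach_prob :: "opt \<Rightarrow> ('s::finite \<Rightarrow> 'a \<Rightarrow> 's \<Rightarrow> real) \<Rightarrow> 's set \<Rightarrow> 's \<Rightarrow> real" where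
  "opt_reach_prob m P T s =
     (case m of OptMin \<Rightarrow> (INF \<sigma>\<in>strategies P. reach_prob P \<sigma> T s)
              | OptMax \<Rightarrow> (SUP \<sigma>\<in>strategies P. reach_prob P \<sigma> T s))"

definition opt_over :: "opt \<Rightarrow> enat set \<Rightarrow> enat" where
  "opt_over m X = (case m of OptMin \<Rightarrow> Min X | OptMax \<Rightarrow> Max X)"

definition Dtilde :: "opt \<Rightarrow> ('s::finite \<Rightarrow> 'a::finite \<Rightarrow> 's \<Rightarrow> real) \<Rightarrow> 's set \<Rightarrow> ('s \<Rightarrow> enat) \<Rightarrow> 's \<Rightarrow> enat" where
  "Dtilde m P T r s =
     (if s \<in> T then \<infinity>
      else opt_over m ((\<lambda>a. Min (r ` Post P s a)
                             + of_bool (\<exists>u\<in>Post P s a. \<exists>v\<in>Post P s a. r u \<noteq> r v)) ` Act P s))"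

end

theory Submission
  imports Defs
begin

lemma mdp_facts:
  assumes "is_mdp P"
  shows "0 \<le> P s a s'" "P s a s' \<le> 1" "\<exists>a. a \<in> Act P s"
  using assms unfolding is_mdp_def Act_def by auto

lemma rw_bounds:
  assumes "is_mdp P" "\<sigma> \<in> strategies P"
  shows "0 \<le> reach_within P \<sigma> T n s \<and> reach_within P \<sigma> T n s \<le> 1"
proof (induction n arbitrary: s)
  case 0 then show ?case by simp
next
  case (Suc n)
  have act: "(\<Sum>s'\<in>UNIV. P s (\<sigma> s) s') = 1"
    using assms(2) unfolding strategies_def Act_def by auto
  have "(\<Sum>s'\<in>UNIV. P s (\<sigma> s) s' * reach_within P \<sigma> T n s') \<le> (\<Sum>s'\<in>UNIV. P s (\<sigma> s) s')"
    by (rule sum_mono) (simp add: Suc mdp_facts[OF assms(1)] mult_left_le)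
  moreover have "0 \<le> (\<Sum>s'\<in>UNIV. P s (\<sigma> s) s' * reach_within P \<sigma> T n s')"
    by (rule sum_nonneg) (simp add: Suc mdp_facts[OF assms(1)])
  ultimately show ?case using act by simp
qed

lemma rw_mono:
  assumes "is_mdp P" "\<sigma> \<in> strategies P"
  shows "reach_within P \<sigma> T n s \<le> reach_within P \<sigma> T (Suc n) s"
proof (induction n arbitrary: s)
  case 0
  have "0 \<le> (\<Sum>s'\<in>UNIV. P s (\<sigma> s) s' * reach_within P \<sigma> T 0 s')"
    by (rule sum_nonneg) (simp add: mdp_facts[OF assms(1)])
  then show ?case by simp
next
  case (Suc n)
  have "(\<Sum>s'\<in>UNIV. P s (\<sigma> s) s' * reach_within P \<sigma> T n s') \<le> (\<Sum>s'\<in>UNIV. P s (\<sigma> s) s' * reach_within P \<sigma> T (Suc n) s')"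
    by (rule sum_mono) (simp add: Suc mdp_facts[OF assms(1)] mult_left_mono del: reach_within.simps)
  then show ?case by (simp only: reach_within.simps) simp
qed

lemma rw_lim:
  assumes "is_mdp P" "\<sigma> \<in> strategies P"
  shows "(\<lambda>n. reach_within P \<sigma> T n s) \<longlonglongrightarrow> reach_prob P \<sigma> T s"
  unfolding reach_prob_def
  apply (rule LIMSEQ_incseq_SUP)
  using rw_bounds[OF assms] apply (auto intro!: bdd_aboveI)[1]
  using rw_mono[OF assms] by (simp add: incseq_SucI)

lemma rp_bounds:
  assumes "is_mdp P" "\<sigma> \<in> strategies P"
  shows "0 \<le> reach_prob P \<sigma> T s \<and> reach_prob P \<sigma> T s \<le> 1"
proof -
  have l: "(\<lambda>n. reach_within P \<sigma> T n s) \<longlonglongrightarrow> reach_prob P \<sigma> T s" by (rule rw_lim[OF assms])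
  have "0 \<le> reach_prob P \<sigma> T s"
    by (rule LIMSEQ_le_const[OF l]) (use rw_bounds[OF assms] in auto)
  moreover have "reach_prob P \<sigma> T s \<le> 1"
    by (rule LIMSEQ_le_const2[OF l]) (use rw_bounds[OF assms] in auto)
  ultimately show ?thesis by simp
qed

lemma rp_fix:
  assumes "is_mdp P" "\<sigma> \<in> strategies P" "s \<notin> T"
  shows "reach_prob P \<sigma> T s = (\<Sum>s'\<in>UNIV. P s (\<sigma> s) s' * reach_prob P \<sigma> T s')"
proof -
  have a: "(\<lambda>n. reach_within P \<sigma> T (Suc n) s) \<longlonglongrightarrow> reach_prob P \<sigma> T s"
    using rw_lim[OF assms(1,2)] by (rule LIMSEQ_Suc)
  have b: "(\<lambda>n. \<Sum>s'\<in>UNIV. P s (\<sigma> s) s' * reach_within P \<sigma> T n s') \<longlonglongrightarrow> (\<Sum>s'\<in>UNIV. P s (\<sigma> s) s' * reach_prob P \<sigma> T s')"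
    by (intro tendsto_sum tendsto_mult tendsto_const rw_lim[OF assms(1,2)])
  show ?thesis using a b assms(3) by (simp add: LIMSEQ_unique)
qed

lemma closed_zero:
  assumes "is_mdp P" "\<forall>s\<in>C. s \<notin> T \<and> Post P s (\<sigma> s) \<subseteq> C" "s \<in> C"
  shows "reach_within P \<sigma> T n s = 0"
  using assms(3)
proof (induction n arbitrary: s)
  case 0 then show ?case using assms(2) by auto
next
  case (Suc n)
  have "P s (\<sigma> s) s' * reach_within P \<sigma> T n s' = 0" for s'
  proof (cases "s' \<in> Post P s (\<sigma> s)")
    case True then show ?thesis using Suc assms(2) by auto
  next
    case False then have "P s (\<sigma> s) s' = 0" using mdp_facts[OF assms(1)]
      unfolding Post_def by (metis mem_Collect_eq order.order_iff_strict)
    then show ?thesis by simp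
  qed
  then show ?case using Suc.prems assms(2) by (simp del: mult_eq_0_iff)
qed

lemma succ_one:
  assumes "is_mdp P" "\<sigma> \<in> strategies P" "s \<notin> T" "reach_prob P \<sigma> T s = 1"
    "u \<in> Post P s (\<sigma> s)"
  shows "reach_prob P \<sigma> T u = 1"
proof (rule ccontr)
  assume "reach_prob P \<sigma> T u \<noteq> 1"
  then have lt: "reach_prob P \<sigma> T u < 1" using rp_bounds[OF assms(1,2)] by (meson le_less)
  have act: "(\<Sum>s'\<in>UNIV. P s (\<sigma> s) s') = 1"
    using assms(2) unfolding strategies_def Act_def by auto
  have "(\<Sum>s'\<in>UNIV. P s (\<sigma> s) s' * (1 - reach_prob P \<sigma> T s')) =
     (\<Sum>s'\<in>UNIV. P s (\<sigma> s) s') - (\<Sum>s'\<in>UNIV. P s (\<sigma> s) s' * reach_prob P \<sigma> T s')"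
    by (simp add: algebra_simps sum_subtractf)
  also have "\<dots> = 0" using act rp_fix[OF assms(1-3)] assms(4) by simp
  finally have z: "(\<Sum>s'\<in>UNIV. P s (\<sigma> s) s' * (1 - reach_prob P \<sigma> T s')) = 0" .
  have nn: "\<forall>s'\<in>UNIV. 0 \<le> P s (\<sigma> s) s' * (1 - reach_prob P \<sigma> T s')"
    using rp_bounds[OF assms(1,2)] mdp_facts[OF assms(1)] by simp
  have "P s (\<sigma> s) u * (1 - reach_prob P \<sigma> T u) = 0"
    using sum_nonneg_eq_0_iff[of UNIV "\<lambda>s'. P s (\<sigma> s) s' * (1 - reach_prob P \<sigma> T s')"] nn z by simp
  moreover have "P s (\<sigma> s) u * (1 - reach_prob P \<sigma> T u) > 0"
    using assms(5) lt unfolding Post_def by simp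
  ultimately show False by (metis less_irrefl)
qed

lemma post_ne:
  assumes "is_mdp P" "\<sigma> \<in> strategies P"
  shows "Post P s (\<sigma> s) \<noteq> {}"
proof
  assume e: "Post P s (\<sigma> s) = {}"
  have "\<forall>s'. P s (\<sigma> s) s' = 0" using e mdp_facts[OF assms(1)] unfolding Post_def
    by (metis empty_iff mem_Collect_eq order.order_iff_strict)
  moreover have "(\<Sum>s'\<in>UNIV. P s (\<sigma> s) s') = 1"
    using assms(2) unfolding strategies_def Act_def by auto
  moreover have "(\<Sum>s'\<in>UNIV. P s (\<sigma> s) s') = 0" using calculation(1) by (intro sum.neutral) simp
  ultimately show False by simp
qed

lemma main:
  fixes P :: "'s::finite \<Rightarrow> 'a::finite \<Rightarrow> 's \<Rightarrow> real" and r :: "'s \<Rightarrow> enat"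
  assumes "is_mdp P" "\<sigma> \<in> strategies P"
    and cond: "\<forall>s. r s < \<infinity> \<longrightarrow> s \<notin> T \<and> Min (r ` Post P s (\<sigma> s))
        + of_bool (\<exists>u\<in>Post P s (\<sigma> s). \<exists>v\<in>Post P s (\<sigma> s). r u \<noteq> r v) \<le> r s"
  shows "\<forall>s. r s < \<infinity> \<longrightarrow> reach_prob P \<sigma> T s < 1"
proof (rule ccontr)
  assume "\<not> ?thesis"
  then obtain s0 where s0: "r s0 < \<infinity>" "\<not> reach_prob P \<sigma> T s0 < 1" by auto
  then have "reach_prob P \<sigma> T s0 = 1" using rp_bounds[OF assms(1,2)] by (meson le_less)
  define K where "K = {k::nat. \<exists>s. r s = enat k \<and> reach_prob P \<sigma> T s = 1}"
  obtain k1 where "r s0 = enat k1" using s0(1) by (cases "r s0") auto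
  then have "k1 \<in> K" unfolding K_def using \<open>reach_prob P \<sigma> T s0 = 1\<close> by auto
  define k0 where "k0 = Least (\<lambda>k. k \<in> K)"
  have k0K: "k0 \<in> K" unfolding k0_def using \<open>k1 \<in> K\<close> by (rule LeastI)
  have k0min: "\<And>k. k \<in> K \<Longrightarrow> k0 \<le> k" unfolding k0_def by (rule Least_le)
  define C where "C = {s. r s = enat k0 \<and> reach_prob P \<sigma> T s = 1}"
  have closed: "\<forall>s\<in>C. s \<notin> T \<and> Post P s (\<sigma> s) \<subseteq> C"
  proof
    fix s assume sC: "s \<in> C"
    then have rs: "r s = enat k0" and one: "reach_prob P \<sigma> T s = 1" unfolding C_def by auto
    have c: "s \<notin> T" "Min (r ` Post P s (\<sigma> s))
        + of_bool (\<exists>u\<in>Post P s (\<sigma> s). \<exists>v\<in>Post P s (\<sigma> s). r u \<noteq> r v) \<le> enat k0"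
    proof -
      have "r s < \<infinity>" using rs by simp
      then show "s \<notin> T" "Min (r ` Post P s (\<sigma> s))
        + of_bool (\<exists>u\<in>Post P s (\<sigma> s). \<exists>v\<in>Post P s (\<sigma> s). r u \<noteq> r v) \<le> enat k0"
        using spec[OF cond, of s, THEN mp, OF \<open>r s < \<infinity>\<close>] rs by simp_all
    qed
    have allone: "\<forall>u\<in>Post P s (\<sigma> s). reach_prob P \<sigma> T u = 1"
      using succ_one[OF assms(1,2) c(1) one] by auto
    have fin: "finite (r ` Post P s (\<sigma> s))" by simp
    have ne: "r ` Post P s (\<sigma> s) \<noteq> {}" using post_ne[OF assms(1,2)] by simp
    have ge: "\<forall>u\<in>Post P s (\<sigma> s). enat k0 \<le> r u"
    proof
      fix u assume u: "u \<in> Post P s (\<sigma> s)"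
      show "enat k0 \<le> r u"
      proof (cases "r u")
        case (enat k)
        then have "k \<in> K" unfolding K_def using allone u by auto
        then show ?thesis using k0min enat by auto
      qed simp
    qed
    have "enat k0 \<le> Min (r ` Post P s (\<sigma> s))" using ge fin ne by simp
    have mk: "enat k0 \<le> Min (r ` Post P s (\<sigma> s))" by fact
    have nc: "\<not> (\<exists>u\<in>Post P s (\<sigma> s). \<exists>v\<in>Post P s (\<sigma> s). r u \<noteq> r v)"
    proof
      assume h: "\<exists>u\<in>Post P s (\<sigma> s). \<exists>v\<in>Post P s (\<sigma> s). r u \<noteq> r v"
      then have "Min (r ` Post P s (\<sigma> s)) + 1 \<le> enat k0" using c(2) by simp
      then have "enat k0 + 1 \<le> enat k0" using mk by (meson add_right_mono order_trans)
      then show False by simp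
    qed
    have ob: "of_bool (\<exists>u\<in>Post P s (\<sigma> s). \<exists>v\<in>Post P s (\<sigma> s). r u \<noteq> r v) = (0::enat)"
      using nc by (simp only: of_bool_eq(1) simp_thms)
    have "Min (r ` Post P s (\<sigma> s)) \<le> enat k0"
      using c(2) by (simp only: ob add_0_right)
    then have meq: "Min (r ` Post P s (\<sigma> s)) = enat k0" using mk by (rule antisym)
    obtain w where w: "w \<in> Post P s (\<sigma> s)" "r w = Min (r ` Post P s (\<sigma> s))"
      using Min_in[OF fin ne] by (metis imageE)
    have "\<forall>u\<in>Post P s (\<sigma> s). r u = enat k0"
    proof
      fix u assume "u \<in> Post P s (\<sigma> s)"
      then have "r u = r w" using nc w(1) by blast
      then show "r u = enat k0" using w(2) meq by simp
    qed
    then show "s \<notin> T \<and> Post P s (\<sigma> s) \<subseteq> C" using allone c(1) unfolding C_def by auto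
  qed
  obtain s where sC: "s \<in> C" using k0K unfolding K_def C_def by auto
  have "reach_prob P \<sigma> T s = 0"
    unfolding reach_prob_def using closed_zero[OF assms(1) closed sC] by simp
  then show False using sC unfolding C_def by simp
qed

theorem proposition2:
  fixes P :: "'s::finite \<Rightarrow> 'a::finite \<Rightarrow> 's \<Rightarrow> real"
    and T :: "'s set" and opt :: opt and r :: "'s \<Rightarrow> enat"
  assumes "is_mdp P"
    and "\<forall>s. Dtilde opt P T r s \<le> r s"
  shows "\<forall>s. r s < \<infinity> \<longrightarrow> opt_reach_prob opt P T s < 1"
proof -
  define f where "f = (\<lambda>s a. Min (r ` Post P s a)
                             + of_bool (\<exists>u\<in>Post P s a. \<exists>v\<in>Post P s a. r u \<noteq> r v))"
  have notT: "s \<notin> T" if "r s < \<infinity>" for s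
  proof
    assume "s \<in> T"
    then have "\<infinity> \<le> r s" using spec[OF assms(2), of s] by (simp add: Dtilde_def)
    then show False using that by simp
  qed
  have D: "opt_over opt (f s ` Act P s) \<le> r s" if "r s < \<infinity>" for s
    using spec[OF assms(2), of s] notT[OF that] unfolding Dtilde_def f_def by simp
  have actne: "Act P s \<noteq> {}" for s using mdp_facts(3)[OF assms(1), of s] by blast
  have finS: "finite (strategies P)" by simp
  show ?thesis
  proof (cases opt)
    case OptMin
    define \<sigma> where "\<sigma> s = (SOME a. a \<in> Act P s \<and> f s a = Min (f s ` Act P s))" for s
    have "\<exists>a. a \<in> Act P s \<and> f s a = Min (f s ` Act P s)" for s
      using Min_in[of "f s ` Act P s"] actne by fastforce
    then have \<sigma>: "\<sigma> s \<in> Act P s \<and> f s (\<sigma> s) = Min (f s ` Act P s)" for s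
      unfolding \<sigma>_def by (rule someI_ex)
    have \<sigma>S: "\<sigma> \<in> strategies P" using \<sigma> unfolding strategies_def by auto
    have m: "\<forall>s. r s < \<infinity> \<longrightarrow> reach_prob P \<sigma> T s < 1"
    proof (rule main[OF assms(1) \<sigma>S], intro allI impI)
      fix s assume rs: "r s < \<infinity>"
      have "f s (\<sigma> s) \<le> r s" using D[OF rs] \<sigma>[of s] unfolding opt_over_def OptMin by simp
      then show "s \<notin> T \<and> Min (r ` Post P s (\<sigma> s))
        + of_bool (\<exists>u\<in>Post P s (\<sigma> s). \<exists>v\<in>Post P s (\<sigma> s). r u \<noteq> r v) \<le> r s"
        using notT[OF rs] unfolding f_def by simp
    qed
    show ?thesis
    proof (intro allI impI)
      fix s assume "r s < \<infinity>"
      have "opt_reach_prob opt P T s \<le> reach_prob P \<sigma> T s"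
        unfolding opt_reach_prob_def OptMin using \<sigma>S finS
        by (auto intro!: cINF_lower bdd_below_finite finite_imageI)
      then show "opt_reach_prob opt P T s < 1" using m \<open>r s < \<infinity>\<close> by auto
    qed
  next
    case OptMax
    have m: "\<forall>s. r s < \<infinity> \<longrightarrow> reach_prob P \<sigma> T s < 1" if \<sigma>S: "\<sigma> \<in> strategies P" for \<sigma>
    proof (rule main[OF assms(1) \<sigma>S], intro allI impI)
      fix s assume rs: "r s < \<infinity>"
      have "f s (\<sigma> s) \<le> Max (f s ` Act P s)"
        using \<sigma>S unfolding strategies_def by (auto intro!: Max_ge)
      then show "s \<notin> T \<and> Min (r ` Post P s (\<sigma> s))
        + of_bool (\<exists>u\<in>Post P s (\<sigma> s). \<exists>v\<in>Post P s (\<sigma> s). r u \<noteq> r v) \<le> r s"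
      proof -
        have "f s (\<sigma> s) \<le> r s" using D[OF rs] \<open>f s (\<sigma> s) \<le> Max (f s ` Act P s)\<close>
          unfolding OptMax opt_over_def by simp
        then show ?thesis using notT[OF rs] unfolding f_def by simp
      qed
    qed
    have Sne: "strategies P \<noteq> {}"
    proof -
      have "(\<lambda>s. SOME a. a \<in> Act P s) \<in> strategies P"
        unfolding strategies_def using actne by (simp add: some_in_eq)
      then show ?thesis by auto
    qed
    show ?thesis
    proof (intro allI impI)
      fix s assume rs: "r s < \<infinity>"
      have fin: "finite ((\<lambda>\<sigma>. reach_prob P \<sigma> T s) ` strategies P)" using finS by simp
      have ne: "(\<lambda>\<sigma>. reach_prob P \<sigma> T s) ` strategies P \<noteq> {}" using Sne by simp
      have "opt_reach_prob opt P T s = Max ((\<lambda>\<sigma>. reach_prob P \<sigma> T s) ` strategies P)"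
        unfolding opt_reach_prob_def OptMax using cSup_eq_Max[OF fin ne] by simp
      also have "\<dots> \<in> (\<lambda>\<sigma>. reach_prob P \<sigma> T s) ` strategies P" using fin ne by (rule Max_in)
      finally show "opt_reach_prob opt P T s < 1" using m rs by auto
    qed
  qed
qed

end
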